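(* Let $\beta>1$ be a root of an irreducible monic polynomial $p\in\mathbb Z[x]$ of degree $d>1$, with Galois conjugates $\beta_2,\dots,\beta_d$. Let $E=[0,B)$ and let $F:E\to E$ be a generalized $\beta$-transformation, i.e. there are $0=x_0<x_1<\dots<x_l=B$ and $y_1,\dots,y_l$ with $\beta I_j-y_j\subseteq E$ and $F(x)=\beta x-y_j$ for $x\in I_j=[x_{j-1},x_j)$, and assume $x_0,\dots,x_l,y_1,\dots,y_l\in\mathbb{Q}(\beta)$. Then: (1) If $|\beta_j|<1$ for all $j=2,\dots,d$, then for every $x\in\mathbb{Q}(\beta)\cap E$ the orbit $\{F^n(x):n\ge0\}$ is finite, hence eventually periodic. (2) If $|\beta_j|>1$ for some $j\in\{2,\dots,d\}$, then there exists $x\in\mathbb{Q}(\beta)\cap E$ whose orbit under $F$ is infinite. *)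

theory Defs
  imports Complex_Main "HOL-Computational_Algebra.Polynomial"
begin

definition Qfield :: "real \<Rightarrow> real set" where
  "Qfield b = {poly (map_poly of_rat q) b | q. True}"

definition gen_beta_transf ::
  "real \<Rightarrow> real \<Rightarrow> nat \<Rightarrow> (nat \<Rightarrow> real) \<Rightarrow> (nat \<Rightarrow> real) \<Rightarrow> (real \<Rightarrow> real) \<Rightarrow> bool" where
  "gen_beta_transf \<beta> B l xs ys F \<longleftrightarrow>
     l \<ge> 1 \<and> xs 0 = 0 \<and> xs l = B \<and> (\<forall>j<l. xs j < xs (Suc j)) \<and>
     (\<forall>j\<in>{1..l}. \<forall>t. xs (j - 1) \<le> t \<and> t < xs j \<longrightarrow>
        0 \<le> \<beta> * t - ys j \<and> \<beta> * t - ys j < B \<and> F t = \<beta> * t - ys j)"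

end

theory Submission imports Defs "Berlekamp_Zassenhaus.Factor_Bound" begin

lemma interp:
  fixes zs :: "complex list"
  assumes "distinct zs"
  shows "\<exists>K. \<forall>c. degree c < length zs \<longrightarrow> (\<forall>z\<in>set zs. cmod (poly c z) \<le> M) \<longrightarrow> (\<forall>i. cmod (poly.coeff c i) \<le> K)"
  using assms
proof (induction zs arbitrary: M)
  case Nil then show ?case by auto
next
  case (Cons z zs)
  define \<delta> where "\<delta> = (if zs = [] then 1 else Min ((\<lambda>z'. cmod (z' - z)) ` set zs))"
  have zn: "z \<notin> set zs" using Cons.prems by auto
  have \<delta>: "\<delta> > 0"
  proof (cases "zs = []")
    case False
    then show ?thesis unfolding \<delta>_def using zn by (auto simp: Min_gr_iff)
  qed (simp add: \<delta>_def)
  have \<delta>le: "\<delta> \<le> cmod (w - z)" if "w \<in> set zs" for w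
    using that unfolding \<delta>_def by (auto intro: Min_le)
  obtain K' where K': "\<And>c. degree c < length zs \<Longrightarrow> (\<forall>z\<in>set zs. cmod (poly c z) \<le> 2*M/\<delta>) \<Longrightarrow> (\<forall>i. cmod (poly.coeff c i) \<le> K')"
  proof -
    have "distinct zs" using Cons.prems by simp
    from Cons.IH[OF this, of "2*M/\<delta>"] show ?thesis using that by blast
  qed
  define K1 where "K1 = max K' 0"
  show ?case
  proof (intro exI[of _ "M + K1 + cmod z * K1"] allI impI)
    fix c :: "complex poly" and i
    assume dc: "degree c < length (z#zs)" and bd: "\<forall>w\<in>set (z#zs). cmod (poly c w) \<le> M"
    have cz: "cmod (poly c z) \<le> M" using bd by simp
    have M0: "0 \<le> M" using cz norm_ge_zero order_trans by blast
    have K10: "0 \<le> K1" unfolding K1_def by simp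
    define s where "s = synthetic_div c z"
    have cs: "c + Polynomial.smult z s = pCons (poly c z) s" unfolding s_def by (rule synthetic_div_correct)
    have sK: "cmod (poly.coeff s j) \<le> K1" for j
    proof (cases "degree c = 0")
      case True then have "s = 0" unfolding s_def by (simp add: synthetic_div_eq_0_iff)
      then show ?thesis using K10 by simp
    next
      case False
      have ds: "degree s < length zs" unfolding s_def degree_synthetic_div using dc False by auto
      have "cmod (poly s w) \<le> 2*M/\<delta>" if w: "w \<in> set zs" for w
      proof -
        have wz: "w - z \<noteq> 0" using zn w by auto
        have "poly c w + z * poly s w = w * poly s w + poly c z"
          using arg_cong[OF cs, of "\<lambda>q. poly q w"] by simp
        then have "(w - z) * poly s w = poly c w - poly c z" by (simp add: algebra_simps)
        then have "poly s w = (poly c w - poly c z) / (w - z)" using wz by (simp add: field_simps)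
        then have "cmod (poly s w) = cmod (poly c w - poly c z) / cmod (w - z)" by (simp add: norm_divide)
        also have "\<dots> \<le> (2*M) / cmod (w - z)"
        proof (rule divide_right_mono)
          have "cmod (poly c w - poly c z) \<le> cmod (poly c w) + cmod (poly c z)" by (rule norm_triangle_ineq4)
          also have "\<dots> \<le> 2 * M"
          proof -
            have "cmod (poly c w) \<le> M" using bd w by simp
            then show ?thesis using cz by linarith
          qed
          finally show "cmod (poly c w - poly c z) \<le> 2 * M" .
        qed simp
        also have "\<dots> \<le> 2*M/\<delta>"
        proof -
          have "0 < cmod (w - z)" using \<delta> \<delta>le[OF w] by linarith
          then show ?thesis using \<delta> \<delta>le[OF w] M0 by (intro divide_left_mono) auto
        qed
        finally show ?thesis .
      qed
      then have "\<forall>i. cmod (poly.coeff s i) \<le> K'" using K' ds by blast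
      then show ?thesis unfolding K1_def by (meson max.coboundedI1)
    qed
    have "poly.coeff c i + z * poly.coeff s i = poly.coeff (pCons (poly c z) s) i"
      using arg_cong[OF cs, of "\<lambda>q. poly.coeff q i"] by simp
    then have ci: "poly.coeff c i = poly.coeff (pCons (poly c z) s) i - z * poly.coeff s i" by (simp add: algebra_simps)
    have pc: "cmod (poly.coeff (pCons (poly c z) s) i) \<le> M + K1"
    proof (cases i)
      case 0 then show ?thesis using cz K10 by simp
    next
      case (Suc n) then show ?thesis using sK[of n] M0 by simp
    qed
    have "cmod (poly.coeff c i) \<le> cmod (poly.coeff (pCons (poly c z) s) i) + cmod (z * poly.coeff s i)"
      unfolding ci by (rule norm_triangle_ineq4)
    also have "cmod (z * poly.coeff s i) \<le> cmod z * K1" unfolding norm_mult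
      by (rule mult_left_mono[OF sK]) simp
    finally show "cmod (poly.coeff c i) \<le> M + K1 + cmod z * K1" using pc by linarith
  qed
qed

lemma finite_bounded_int_polys: "finite {c :: int poly. degree c < n \<and> (\<forall>i. \<bar>poly.coeff c i\<bar> \<le> N)}"
proof -
  have "{c :: int poly. degree c < n \<and> (\<forall>i. \<bar>poly.coeff c i\<bar> \<le> N)} \<subseteq> Poly ` {xs. set xs \<subseteq> {-N..N} \<and> length xs = n}"
  proof
    fix c :: "int poly" assume c: "c \<in> {c. degree c < n \<and> (\<forall>i. \<bar>poly.coeff c i\<bar> \<le> N)}"
    have dc: "degree c < n" using c by blast
    have "c = Poly (map (poly.coeff c) [0..<n])"
    proof (rule poly_eqI)
      fix i show "poly.coeff c i = poly.coeff (Poly (map (poly.coeff c) [0..<n])) i"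
      proof (cases "i < n")
        case True then show ?thesis by (simp add: nth_default_def)
      next
        case False then show ?thesis using dc by (simp add: nth_default_def coeff_eq_0)
      qed
    qed
    moreover have "set (map (poly.coeff c) [0..<n]) \<subseteq> {-N..N}"
    proof
      fix x assume "x \<in> set (map (poly.coeff c) [0..<n])"
      then obtain i where x: "x = poly.coeff c i" by auto
      have "\<bar>poly.coeff c i\<bar> \<le> N" using c by blast
      then show "x \<in> {-N..N}" unfolding x by (auto simp: abs_le_iff)
    qed
    moreover have "length (map (poly.coeff c) [0..<n]) = n" by simp
    ultimately show "c \<in> Poly ` {xs. set xs \<subseteq> {-N..N} \<and> length xs = n}" by blast
  qed
  moreover have "finite (Poly ` {xs. set xs \<subseteq> {-N..N} \<and> length xs = n})"
    by (intro finite_imageI finite_lists_length_eq) simp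
  ultimately show ?thesis using finite_subset by blast
qed

lemma gbt_D:
  assumes "gen_beta_transf \<beta> B l xs ys F"
  shows "l \<ge> 1" "xs 0 = 0" "xs l = B" "\<And>j. j < l \<Longrightarrow> xs j < xs (Suc j)"
    "\<And>j t. j \<in> {1..l} \<Longrightarrow> xs (j - 1) \<le> t \<Longrightarrow> t < xs j \<Longrightarrow>
        0 \<le> \<beta> * t - ys j \<and> \<beta> * t - ys j < B \<and> F t = \<beta> * t - ys j"
  using assms unfolding gen_beta_transf_def by blast+

lemma F_step:
  assumes g: "gen_beta_transf \<beta> B l xs ys F" and t: "0 \<le> t" "t < B"
  shows "\<exists>j\<in>{1..l}. F t = \<beta>*t - ys j \<and> 0 \<le> F t \<and> F t < B"
proof -
  define j where "j = (LEAST j. t < xs j)"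
  have ex: "t < xs l" using gbt_D(3)[OF g] t by simp
  have tj: "t < xs j" unfolding j_def by (rule LeastI[of _ l]) (rule ex)
  have jl: "j \<le> l" unfolding j_def by (rule Least_le) (rule ex)
  have j0: "j \<noteq> 0"
  proof
    assume "j = 0"
    with tj gbt_D(2)[OF g] t show False by simp
  qed
  have "\<not> t < xs (j - 1)" using not_less_Least[of "j-1" "\<lambda>j. t < xs j"] j0 unfolding j_def by simp
  then have le: "xs (j - 1) \<le> t" by simp
  have jin: "j \<in> {1..l}" using j0 jl by simp
  from gbt_D(5)[OF g jin le tj] jin show ?thesis by auto
qed

lemma B_pos:
  assumes g: "gen_beta_transf \<beta> B l xs ys F"
  shows "0 < B"
proof -
  have mono: "n \<le> l \<Longrightarrow> xs 0 \<le> xs n" for n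
  proof (induction n)
    case (Suc n)
    then have "n < l" by simp
    then have "xs n < xs (Suc n)" by (rule gbt_D(4)[OF g])
    moreover have "xs 0 \<le> xs n" using Suc by simp
    ultimately show ?case by simp
  qed simp
  have l1: "l - 1 < l" using gbt_D(1)[OF g] by simp
  have a: "xs 0 \<le> xs (l - 1)" by (rule mono) simp
  have b: "xs (l - 1) < xs (Suc (l - 1))" by (rule gbt_D(4)[OF g l1])
  have c: "Suc (l - 1) = l" using gbt_D(1)[OF g] by simp
  show ?thesis using a b gbt_D(2,3)[OF g] unfolding c by simp
qed

lemma finite_range_periodic:
  fixes f :: "nat \<Rightarrow> 'a"
  assumes "finite (range f)"
  shows "\<exists>m k. k > 0 \<and> f (m + k) = f m"
proof -
  have "\<not> inj f" using assms range_inj_infinite by blast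
  then obtain a b where ab: "a \<noteq> b" "f a = f b" unfolding inj_def by blast
  show ?thesis
  proof (cases "a < b")
    case True then show ?thesis using ab by (intro exI[of _ a] exI[of _ "b - a"]) auto
  next
    case False then show ?thesis using ab by (intro exI[of _ b] exI[of _ "a - b"]) auto
  qed
qed

lemma irr_rat:
  fixes p :: "int poly" assumes "irreducible p" "lead_coeff p = 1"
  shows "irreducible (of_int_poly p :: rat poly)"
proof -
  have "content p dvd 1" using content_dvd_coeff[of p "degree p"] assms(2) by simp
  then have "content p = 1" using content_ge_0_int[of p] by (simp add: zdvd1_eq)
  then have "primitive p" by simp
  then have "irreducible\<^sub>d p" using irreducible_primitive_connect[OF \<open>primitive p\<close>] assms(1) by simp
  then show ?thesis using irreducible\<^sub>d_int_rat irreducible_connect_field by blast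
qed

interpretation ofr: map_poly_comm_ring_hom "of_rat :: rat \<Rightarrow> complex" ..
interpretation ofrR: map_poly_comm_ring_hom "of_rat :: rat \<Rightarrow> real" ..

lemma of_real_of_rat': "complex_of_real (of_rat r) = of_rat r"
  by (cases r) (simp add: of_rat_rat)

definition ev :: "complex \<Rightarrow> rat poly \<Rightarrow> complex" where
  "ev w q = poly (map_poly of_rat q) w"

lemma ev_add[simp]: "ev w (a + b) = ev w a + ev w b"
  unfolding ev_def by (simp add: ofr.hom_add)
lemma ev_diff[simp]: "ev w (a - b) = ev w a - ev w b"
  unfolding ev_def by (simp add: ofr.hom_minus)
lemma ev_mult[simp]: "ev w (a * b) = ev w a * ev w b"
  unfolding ev_def by (simp add: ofr.hom_mult)
lemma ev_const[simp]: "ev w [:c:] = of_rat c"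
  unfolding ev_def by (simp add: of_rat_hom.map_poly_pCons_hom)
lemma ev_X[simp]: "ev w [:0,1:] = w"
  unfolding ev_def by (simp add: of_rat_hom.map_poly_pCons_hom)
lemma ev_0[simp]: "ev w 0 = 0"
  unfolding ev_def by simp

lemma ev_pCons[simp]: "ev w (pCons a q) = of_rat a + w * ev w q"
  unfolding ev_def by (simp add: of_rat_hom.map_poly_pCons_hom)

lemma ev_pCons0[simp]: "ev w (pCons 0 a) = w * ev w a"
  unfolding ev_def by (simp add: of_rat_hom.map_poly_pCons_hom)
lemma ev_smult[simp]: "ev w (Polynomial.smult c a) = of_rat c * ev w a"
  unfolding ev_def by (simp add: of_rat_hom.map_poly_hom_smult)
lemma ev_of_int[simp]: "ev w (of_int_poly c) = poly (of_int_poly c) w"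
  unfolding ev_def by (simp add: map_poly_map_poly o_def)
lemma ev_real: "ev (complex_of_real x) q = complex_of_real (poly (map_poly of_rat q) x)"
proof -
  have "map_poly (of_rat :: rat \<Rightarrow> complex) q = map_poly complex_of_real (map_poly of_rat q)"
    by (simp add: map_poly_map_poly o_def of_real_of_rat')
  then show ?thesis unfolding ev_def by (simp add: of_real_hom.poly_map_poly)
qed

lemma key:
  fixes p :: "int poly" assumes "irreducible p" "lead_coeff p = 1"
    and w: "poly (of_int_poly p) w = (0::complex)" and q: "ev w q = 0"
  shows "(of_int_poly p :: rat poly) dvd q"
proof -
  let ?P = "of_int_poly p :: rat poly"
  have irr: "irreducible ?P" using irr_rat assms by blast
  define g where "g = gcd ?P q"
  have "g dvd ?P" unfolding g_def by simp
  then obtain h where Pgh: "?P = g * h" by (auto elim: dvdE)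
  from irreducibleD[OF irr Pgh] have "is_unit g \<or> is_unit h" .
  then show ?thesis
  proof
    assume u: "is_unit g"
    have bz: "fst (bezout_coefficients ?P q) * ?P + snd (bezout_coefficients ?P q) * q = g"
      unfolding g_def by (rule bezout_coefficients_fst_snd)
    have "ev w ?P = 0" using w by simp
    then have "ev w g = 0" using q by (simp flip: bz)
    moreover obtain c where "g = [:c:]" "is_unit c" using u unfolding is_unit_poly_iff by blast
    ultimately show ?thesis by simp
  next
    assume u: "is_unit h"
    have "g * h dvd g" by (simp add: mult_unit_dvd_iff[OF u])
    then have "?P dvd g" using Pgh by simp
    then show ?thesis unfolding g_def using dvd_trans gcd_dvd2 by blast
  qed
qed


lemma of_int_rat_poly: "map_poly (of_rat :: rat \<Rightarrow> 'a::field_char_0) (of_int_poly c) = of_int_poly c"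
  by (simp add: map_poly_map_poly o_def)

lemma Qfield_iff: "x \<in> Qfield b \<longleftrightarrow> (\<exists>q. x = poly (map_poly of_rat q) b)"
  unfolding Qfield_def by auto

locale bsetup =
  fixes p :: "int poly" and \<beta> :: real
  assumes irr: "irreducible p" and monic: "lead_coeff p = 1" and deg: "degree p > 1"
    and root: "poly (map_poly real_of_int p) \<beta> = 0"
begin

definition sigma :: "complex \<Rightarrow> real \<Rightarrow> complex" where
  "sigma z x = ev z (SOME q. x = poly (map_poly of_rat q) \<beta>)"

lemma rootC: "poly (of_int_poly p) (complex_of_real \<beta>) = 0"
proof -
  have "(of_int_poly p :: complex poly) = map_poly complex_of_real (of_int_poly p)"
    by (simp add: map_poly_map_poly o_def)
  then show ?thesis using root by (simp add: of_real_hom.poly_map_poly)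
qed

lemma sigma_poly:
  assumes z: "poly (of_int_poly p) z = 0"
  shows "sigma z (poly (map_poly of_rat q) \<beta>) = ev z q"
proof -
  define q' where "q' = (SOME q'. poly (map_poly of_rat q) \<beta> = poly (map_poly of_rat q') \<beta>)"
  have "poly (map_poly of_rat q) \<beta> = poly (map_poly of_rat q') \<beta>"
    unfolding q'_def by (rule someI_ex) blast
  then have "ev (complex_of_real \<beta>) (q' - q) = 0" by (simp add: ev_real)
  from key[OF irr monic rootC this] obtain k where k: "q' - q = of_int_poly p * k" by (auto elim: dvdE)
  have "ev z (q' - q) = 0" unfolding k using z by simp
  then show ?thesis unfolding sigma_def q'_def[symmetric] by simp
qed

lemma sigma_real: "x \<in> Qfield \<beta> \<Longrightarrow> sigma (complex_of_real \<beta>) x = complex_of_real x"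
  unfolding Qfield_iff using sigma_poly[OF rootC] ev_real by auto

lemma Qfield_step:
  assumes "x \<in> Qfield \<beta>" "y \<in> Qfield \<beta>"
  shows "\<beta> * x - y \<in> Qfield \<beta>"
    "poly (of_int_poly p) z = 0 \<Longrightarrow> sigma z (\<beta> * x - y) = z * sigma z x - sigma z y"
proof -
  obtain qx qy where x: "x = poly (map_poly of_rat qx) \<beta>" and y: "y = poly (map_poly of_rat qy) \<beta>"
    using assms unfolding Qfield_iff by blast
  have e: "\<beta> * x - y = poly (map_poly of_rat ([:0,1:] * qx - qy)) \<beta>"
    unfolding x y by (simp add: ofrR.hom_minus ofrR.hom_mult of_rat_hom.map_poly_pCons_hom)
  then show "\<beta> * x - y \<in> Qfield \<beta>" unfolding Qfield_iff by blast
  assume z: "poly (of_int_poly p) z = 0"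
  show "sigma z (\<beta> * x - y) = z * sigma z x - sigma z y"
    unfolding e using sigma_poly[OF z] x y by simp
qed

definition Lat :: "int \<Rightarrow> real \<Rightarrow> bool" where
  "Lat D w \<longleftrightarrow> (\<exists>c::int poly. real_of_int D * w = poly (of_int_poly c) \<beta>)"

lemma Lat_step: "Lat D x \<Longrightarrow> Lat D y \<Longrightarrow> Lat D (\<beta> * x - y)"
proof -
  assume "Lat D x" "Lat D y"
  then obtain cx cy where x: "real_of_int D * x = poly (of_int_poly cx) \<beta>"
    and y: "real_of_int D * y = poly (of_int_poly cy) \<beta>" unfolding Lat_def by blast
  have "real_of_int D * (\<beta> * x - y) = poly (of_int_poly ([:0,1:] * cx - cy)) \<beta>"
    using x y by (simp add: of_int_poly_hom.hom_minus of_int_poly_hom.hom_mult of_int_hom.map_poly_pCons_hom algebra_simps)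
  then show ?thesis unfolding Lat_def by blast
qed

lemma Lat_mult: "Lat d x \<Longrightarrow> Lat (e * d) x"
proof -
  assume "Lat d x"
  then obtain c where x: "real_of_int d * x = poly (of_int_poly c) \<beta>" unfolding Lat_def by blast
  have "real_of_int (e * d) * x = poly (of_int_poly (Polynomial.smult e c)) \<beta>"
    using x by (simp add: of_int_hom.map_poly_hom_smult)
  then show ?thesis unfolding Lat_def by blast
qed

lemma Qfield_Lat: "x \<in> Qfield \<beta> \<Longrightarrow> \<exists>d>0. Lat d x"
proof -
  assume "x \<in> Qfield \<beta>"
  then obtain q where x: "x = poly (map_poly of_rat q) \<beta>" unfolding Qfield_iff by blast
  obtain d c where dc: "rat_to_int_poly q = (d, c)" by (cases "rat_to_int_poly q")
  from rat_to_int_poly[OF dc] have q: "q = Polynomial.smult (inverse (of_int d)) (of_int_poly c)" and d: "d > 0"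
    by auto
  have "x = inverse (real_of_int d) * poly (of_int_poly c) \<beta>"
    unfolding x q by (simp add: of_rat_hom.map_poly_hom_smult of_int_rat_poly of_rat_inverse)
  then have "real_of_int d * x = poly (of_int_poly c) \<beta>" using d by simp
  then show ?thesis using d unfolding Lat_def by blast
qed

lemma Lat_sigma:
  assumes "Lat D w" "D > 0"
  shows "\<exists>c::int poly. degree c < degree p \<and>
     (\<forall>z. poly (of_int_poly p) z = 0 \<longrightarrow> of_int D * sigma z w = poly (of_int_poly c) z)"
proof -
  obtain c where c: "real_of_int D * w = poly (of_int_poly c) \<beta>" using assms unfolding Lat_def by blast
  have p0: "p \<noteq> 0" using deg by auto
  obtain q r where qr: "pseudo_divmod c p = (q, r)" by (cases "pseudo_divmod c p")
  from pseudo_divmod[OF p0 qr] monic have cqr: "c = p * q + r" and r: "r = 0 \<or> degree r < degree p"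
    by auto
  have dr: "degree r < degree p" using r deg by auto
  have w: "w = poly (map_poly of_rat (Polynomial.smult (inverse (of_int D)) (of_int_poly c))) \<beta>"
    using c assms(2) by (simp add: of_rat_hom.map_poly_hom_smult of_int_rat_poly of_rat_inverse of_rat_divide field_simps)
  have "of_int D * sigma z w = poly (of_int_poly r) z" if z: "poly (of_int_poly p) z = 0" for z
  proof -
    have "sigma z w = of_rat (inverse (of_int D)) * poly (of_int_poly c) z"
      unfolding w sigma_poly[OF z] by simp
    also have "poly (of_int_poly c) z = poly (of_int_poly r) z"
      unfolding cqr using z by (simp add: of_int_hom.map_poly_hom_add of_int_poly_hom.hom_mult)
    finally show ?thesis using assms(2) by (simp add: of_rat_inverse)
  qed
  then show ?thesis using dr by blast
qed


lemma orbit_inv: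
  assumes g: "gen_beta_transf \<beta> B l xs ys F" and ysQ: "\<forall>j\<in>{1..l}. ys j \<in> Qfield \<beta>"
    and x: "x \<in> Qfield \<beta>" "0 \<le> x" "x < B"
  shows "(F^^n) x \<in> Qfield \<beta> \<and> 0 \<le> (F^^n) x \<and> (F^^n) x < B"
proof (induction n)
  case 0 then show ?case using x by simp
next
  case (Suc n)
  then obtain j where j: "j \<in> {1..l}" "F ((F^^n) x) = \<beta> * (F^^n) x - ys j"
      "0 \<le> F ((F^^n) x)" "F ((F^^n) x) < B"
    using F_step[OF g] by blast
  have "ys j \<in> Qfield \<beta>" using ysQ j(1) by blast
  then have "\<beta> * (F^^n) x - ys j \<in> Qfield \<beta>" using Qfield_step(1) Suc.IH by blast
  then show ?case using j by simp
qed

lemma sig_step: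
  assumes g: "gen_beta_transf \<beta> B l xs ys F" and ysQ: "\<forall>j\<in>{1..l}. ys j \<in> Qfield \<beta>"
    and t: "t \<in> Qfield \<beta>" "0 \<le> t" "t < B"
  shows "\<exists>j\<in>{1..l}. F t = \<beta> * t - ys j \<and>
     (\<forall>z. poly (of_int_poly p) z = 0 \<longrightarrow> sigma z (F t) = z * sigma z t - sigma z (ys j))"
proof -
  obtain j where j: "j \<in> {1..l}" "F t = \<beta> * t - ys j" using F_step[OF g t(2,3)] by blast
  have yQ: "ys j \<in> Qfield \<beta>" using ysQ j(1) by blast
  show ?thesis
  proof (intro bexI[OF _ j(1)] conjI allI impI)
    show "F t = \<beta> * t - ys j" by (rule j(2))
    fix z :: complex assume z: "poly (of_int_poly p) z = 0"
    show "sigma z (F t) = z * sigma z t - sigma z (ys j)"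
      unfolding j(2) by (rule Qfield_step(2)[OF t(1) yQ z])
  qed
qed

lemma orbit_Lat:
  assumes g: "gen_beta_transf \<beta> B l xs ys F" and ysQ: "\<forall>j\<in>{1..l}. ys j \<in> Qfield \<beta>"
    and x: "x \<in> Qfield \<beta>" "0 \<le> x" "x < B"
    and L: "Lat D x" "\<forall>j\<in>{1..l}. Lat D (ys j)"
  shows "Lat D ((F^^n) x)"
proof (induction n)
  case 0 then show ?case using L by simp
next
  case (Suc n)
  have inv: "(F^^n) x \<in> Qfield \<beta>" "0 \<le> (F^^n) x" "(F^^n) x < B"
    using orbit_inv[OF g ysQ x] by auto
  obtain j where j: "j \<in> {1..l}" "F ((F^^n) x) = \<beta> * (F^^n) x - ys j"
    using F_step[OF g inv(2,3)] by blast
  have "Lat D (\<beta> * (F^^n) x - ys j)" using Lat_step Suc.IH L(2) j(1) by blast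
  then show ?case using j by simp
qed

lemma part2:
  assumes g: "gen_beta_transf \<beta> B l xs ys F" and ysQ: "\<forall>j\<in>{1..l}. ys j \<in> Qfield \<beta>"
    and z: "poly (of_int_poly p) z = 0" "z \<noteq> complex_of_real \<beta>" "cmod z > 1"
  shows "\<exists>x\<in>Qfield \<beta> \<inter> {0..<B}. infinite {(F ^^ n) x | n. True}"
proof -
  define M where "M = (\<Sum>j\<in>{1..l}. cmod (sigma z (ys j)))"
  have M0: "0 \<le> M" unfolding M_def by (simp add: sum_nonneg)
  define C where "C = M / (cmod z - 1)"
  have C0: "0 \<le> C" unfolding C_def using M0 z(3) by simp
  have CM: "C * (cmod z - 1) = M" unfolding C_def using z(3) by simp
  have Bp: "0 < B" by (rule B_pos[OF g])
  define \<delta> where "\<delta> = cmod (z - complex_of_real \<beta>)"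
  have \<delta>: "\<delta> > 0" unfolding \<delta>_def using z(2) by simp
  define b :: nat where "b = nat \<lceil>(C + B) / \<delta>\<rceil> + 1"
  have "(C + B) / \<delta> \<le> real (nat \<lceil>(C + B) / \<delta>\<rceil>)" by (rule real_nat_ceiling_ge)
  then have "(C + B) / \<delta> < real b" unfolding b_def by simp
  then have b\<delta>: "C + B < real b * \<delta>" using \<delta> by (simp add: pos_divide_less_eq)
  obtain a where a: "a \<in> \<rat>" "real b * \<beta> - B < a" "a < real b * \<beta>"
    using Rats_dense_in_real[of "real b * \<beta> - B" "real b * \<beta>"] Bp by auto
  then obtain a' where a': "a = of_rat a'" by (auto elim: Rats_cases)
  define x where "x = real b * \<beta> - a"
  have xq: "x = poly (map_poly of_rat [:-a', of_nat b:]) \<beta>"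
    unfolding x_def a' by (simp add: of_rat_hom.map_poly_pCons_hom of_rat_minus algebra_simps)
  have xQ: "x \<in> Qfield \<beta>" using xq unfolding Qfield_iff by blast
  have x0: "0 \<le> x" "x < B" using a unfolding x_def by auto
  have "sigma z x = ev z [:-a', of_nat b:]" by (subst xq) (rule sigma_poly[OF z(1)])
  then have sx: "sigma z x = - of_rat a' + z * of_nat b" by (simp add: of_rat_minus)
  have e: "of_nat b * (z - complex_of_real \<beta>) = sigma z x - complex_of_real x"
  proof -
    have xr: "complex_of_real x = of_nat b * complex_of_real \<beta> - of_rat a'"
      unfolding x_def a' by (simp add: of_real_of_rat')
    show ?thesis unfolding sx xr by (simp add: algebra_simps)
  qed
  have "real b * \<delta> = cmod (of_nat b * (z - complex_of_real \<beta>))"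
    unfolding \<delta>_def norm_mult by simp
  also have "\<dots> \<le> cmod (sigma z x) + cmod (complex_of_real x)" unfolding e by (rule norm_triangle_ineq4)
  also have "cmod (complex_of_real x) = x" using x0 by simp
  finally have sxC: "cmod (sigma z x) > C" using b\<delta> x0 by linarith
  define gn where "gn n = cmod (sigma z ((F^^n) x))" for n
  have step: "gn (Suc n) - C \<ge> cmod z * (gn n - C)" for n
  proof -
    have inv: "(F^^n) x \<in> Qfield \<beta>" "0 \<le> (F^^n) x" "(F^^n) x < B"
      using orbit_inv[OF g ysQ xQ x0] by auto
    obtain j where j: "j \<in> {1..l}"
      and sj: "sigma z (F ((F^^n) x)) = z * sigma z ((F^^n) x) - sigma z (ys j)"
      using sig_step[OF g ysQ inv] z(1) by blast
    have yM: "cmod (sigma z (ys j)) \<le> M" unfolding M_def by (rule member_le_sum) (use j in auto)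
    have "z * sigma z ((F^^n) x) = sigma z (F ((F^^n) x)) + sigma z (ys j)" using sj by simp
    then have "cmod (z * sigma z ((F^^n) x)) \<le> cmod (sigma z (F ((F^^n) x))) + cmod (sigma z (ys j))"
      by (metis norm_triangle_ineq)
    then have "cmod z * gn n \<le> gn (Suc n) + M" unfolding gn_def norm_mult using yM by simp
    moreover have "cmod z * (gn n - C) = cmod z * gn n - C - M" using CM by (simp add: algebra_simps)
    ultimately show ?thesis by linarith
  qed
  have pos: "gn n > C" for n
  proof (induction n)
    case 0 then show ?case using sxC unfolding gn_def by simp
  next
    case (Suc n)
    have "0 < cmod z * (gn n - C)" using Suc z(3) by (intro mult_pos_pos) auto
    then show ?case using step[of n] by linarith
  qed
  have inc: "gn n < gn (Suc n)" for n
  proof -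
    have "0 < (cmod z - 1) * (gn n - C)" using pos[of n] z(3) by (intro mult_pos_pos) auto
    then show ?thesis using step[of n] by (simp add: algebra_simps)
  qed
  have "strict_mono gn" using inc by (simp add: strict_mono_Suc_iff)
  then have ig: "inj gn" by (rule strict_mono_imp_inj_on)
  have "inj (\<lambda>n. (F^^n) x)"
  proof (rule injI)
    fix m n assume "(F^^m) x = (F^^n) x"
    then have "gn m = gn n" unfolding gn_def by simp
    then show "m = n" using ig by (simp add: inj_eq)
  qed
  then have "infinite (range (\<lambda>n. (F^^n) x))" by (rule range_inj_infinite)
  moreover have "{(F ^^ n) x | n. True} = range (\<lambda>n. (F^^n) x)" by auto
  ultimately have "infinite {(F ^^ n) x | n. True}" by simp
  moreover have "x \<in> Qfield \<beta> \<inter> {0..<B}" using xQ x0 by simp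
  ultimately show ?thesis by blast
qed

lemma rsf: "rsquarefree (of_int_poly p :: complex poly)"
  unfolding rsquarefree_roots
proof (intro allI notI)
  fix a :: complex
  assume a: "poly (of_int_poly p) a = 0 \<and> poly (pderiv (of_int_poly p)) a = 0"
  have "pderiv (of_int_poly p :: complex poly) = of_int_poly (pderiv p)" by (simp add: of_int_hom.map_poly_pderiv)
  then have "ev a (of_int_poly (pderiv p)) = 0" using a by simp
  from key[OF irr monic _ this] a have dv: "(of_int_poly p :: rat poly) dvd of_int_poly (pderiv p)" by blast
  have e: "(of_int_poly (pderiv p) :: rat poly) = pderiv (of_int_poly p)" by (simp add: of_int_hom.map_poly_pderiv)
  have dP: "degree (of_int_poly p :: rat poly) = degree p" by simp
  have nz: "pderiv (of_int_poly p :: rat poly) \<noteq> 0" using deg dP by (simp add: pderiv_eq_0_iff)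
  have "degree (of_int_poly p :: rat poly) \<le> degree (pderiv (of_int_poly p :: rat poly))"
    using dvd_imp_degree_le[OF dv[unfolded e] nz] .
  moreover have "degree (pderiv (of_int_poly p :: rat poly)) = degree p - 1" using dP by (simp add: degree_pderiv)
  ultimately show False using deg dP by simp
qed

lemma part1:
  assumes g: "gen_beta_transf \<beta> B l xs ys F" and ysQ: "\<forall>j\<in>{1..l}. ys j \<in> Qfield \<beta>"
    and small: "\<forall>z. poly (of_int_poly p) z = 0 \<and> z \<noteq> complex_of_real \<beta> \<longrightarrow> cmod z < 1"
    and x: "x \<in> Qfield \<beta>" "0 \<le> x" "x < B"
  shows "finite {(F ^^ n) x | n. True}"
proof -
  let ?pC = "of_int_poly p :: complex poly"
  let ?b = "complex_of_real \<beta>"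
  define R where "R = {z. poly ?pC z = 0}"
  have "degree ?pC = degree p" by simp
  then have p0: "?pC \<noteq> 0" using deg by auto
  have finR: "finite R" unfolding R_def using p0 by (rule poly_roots_finite)
  have cardR: "card R = degree p" using rsquarefree_card_degree[OF p0] rsf unfolding R_def by simp
  obtain zs where zs: "set zs = R" "distinct zs" using finite_distinct_list[OF finR] by blast
  have lzs: "length zs = degree p" using distinct_card[OF zs(2)] zs(1) cardR by simp
  have Bp: "0 < B" by (rule B_pos[OF g])
  define Mz where "Mz z = (\<Sum>j\<in>{1..l}. cmod (sigma z (ys j)))" for z
  define Kz where "Kz z = cmod (sigma z x) + Mz z / (1 - cmod z)" for z
  define Kall where "Kall = B + (\<Sum>z\<in>R - {?b}. Kz z)"
  have Mz0: "0 \<le> Mz z" for z unfolding Mz_def by (simp add: sum_nonneg)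
  have zsmall: "cmod z < 1" if "z \<in> R - {?b}" for z using small that unfolding R_def by blast
  have Kz0: "0 \<le> Kz z" if "z \<in> R - {?b}" for z
    using zsmall[OF that] Mz0[of z] unfolding Kz_def by simp
  have sum0: "0 \<le> (\<Sum>z\<in>R - {?b}. Kz z)" by (rule sum_nonneg) (use Kz0 in auto)
  have bnd: "cmod (sigma z ((F^^n) x)) \<le> Kall" if zR: "z \<in> R" for z n
  proof (cases "z = ?b")
    case True
    have inv: "(F^^n) x \<in> Qfield \<beta>" "0 \<le> (F^^n) x" "(F^^n) x < B"
      using orbit_inv[OF g ysQ x] by auto
    have "cmod (sigma z ((F^^n) x)) = (F^^n) x" unfolding True sigma_real[OF inv(1)] using inv(2) by simp
    then show ?thesis using inv(3) sum0 unfolding Kall_def by linarith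
  next
    case False
    have zr: "poly ?pC z = 0" using zR R_def by simp
    have zl: "cmod z < 1" using zsmall zR False by blast
    have "cmod (sigma z ((F^^m) x)) \<le> Kz z" for m
    proof (induction m)
      case 0
      have "0 \<le> Mz z / (1 - cmod z)" using Mz0[of z] zl by simp
      then show ?case unfolding Kz_def by simp
    next
      case (Suc m)
      have inv: "(F^^m) x \<in> Qfield \<beta>" "0 \<le> (F^^m) x" "(F^^m) x < B"
        using orbit_inv[OF g ysQ x] by auto
      obtain j where j: "j \<in> {1..l}"
        and sj: "sigma z (F ((F^^m) x)) = z * sigma z ((F^^m) x) - sigma z (ys j)"
        using sig_step[OF g ysQ inv] zr by blast
      have yM: "cmod (sigma z (ys j)) \<le> Mz z" unfolding Mz_def by (rule member_le_sum) (use j in auto)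
      have "cmod (sigma z (F ((F^^m) x))) \<le> cmod (z * sigma z ((F^^m) x)) + cmod (sigma z (ys j))"
        unfolding sj by (rule norm_triangle_ineq4)
      also have "cmod (z * sigma z ((F^^m) x)) \<le> cmod z * Kz z"
        unfolding norm_mult by (rule mult_left_mono[OF Suc.IH]) simp
      finally have a1: "cmod (sigma z (F ((F^^m) x))) \<le> cmod z * Kz z + Mz z" using yM by linarith
      have "(1 - cmod z) * Kz z = (1 - cmod z) * cmod (sigma z x) + Mz z"
        unfolding Kz_def using zl by (simp add: field_simps)
      moreover have "0 \<le> (1 - cmod z) * cmod (sigma z x)" using zl by simp
      ultimately have "cmod z * Kz z + Mz z \<le> Kz z" by (simp add: algebra_simps)
      then show ?case using a1 by simp
    qed
    moreover have "Kz z \<le> (\<Sum>z\<in>R - {?b}. Kz z)"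
      by (rule member_le_sum) (use zR False Kz0 finR in auto)
    ultimately show ?thesis unfolding Kall_def using Bp by (meson add_increasing less_imp_le order_trans)
  qed
  obtain dx where dx: "dx > 0" "Lat dx x" using Qfield_Lat[OF x(1)] by blast
  have "\<forall>j\<in>{1..l}. \<exists>d. d > 0 \<and> Lat d (ys j)" using ysQ Qfield_Lat by blast
  then obtain dy where dy: "\<forall>j\<in>{1..l}. dy j > 0 \<and> Lat (dy j) (ys j)" using bchoice by metis
  define D where "D = dx * (\<Prod>j\<in>{1..l}. dy j)"
  have "(\<Prod>j\<in>{1..l}. dy j) > 0" by (rule prod_pos) (use dy in blast)
  then have D0: "D > 0" unfolding D_def using dx by simp
  have LDx: "Lat D x" unfolding D_def using Lat_mult[OF dx(2), of "\<Prod>j\<in>{1..l}. dy j"] by (simp add: mult.commute)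
  have LDy: "\<forall>j\<in>{1..l}. Lat D (ys j)"
  proof
    fix j assume j: "j \<in> {1..l}"
    have "D = (dx * (\<Prod>i\<in>{1..l}-{j}. dy i)) * dy j"
      unfolding D_def using prod.remove[of "{1..l}" j dy] j by (simp add: algebra_simps)
    then show "Lat D (ys j)" using Lat_mult[of "dy j" "ys j" "dx * (\<Prod>i\<in>{1..l}-{j}. dy i)"] dy j by simp
  qed
  obtain K where K: "\<forall>c. degree c < length zs \<longrightarrow> (\<forall>z\<in>set zs. cmod (poly c z) \<le> of_int D * Kall)
      \<longrightarrow> (\<forall>i. cmod (poly.coeff c i) \<le> K)" using interp[OF zs(2)] by blast
  define S where "S = {c::int poly. degree c < degree p \<and> (\<forall>i. \<bar>poly.coeff c i\<bar> \<le> \<lceil>K\<rceil>)}"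
  have finS: "finite S" unfolding S_def by (rule finite_bounded_int_polys)
  have sub: "{(F^^n) x | n. True} \<subseteq> (\<lambda>c. Re (poly (of_int_poly c) ?b) / of_int D) ` S"
  proof
    fix w assume "w \<in> {(F^^n) x | n. True}"
    then obtain n where w: "w = (F^^n) x" by blast
    have inv: "w \<in> Qfield \<beta>" "0 \<le> w" "w < B" using orbit_inv[OF g ysQ x] w by auto
    have LD: "Lat D w" using orbit_Lat[OF g ysQ x LDx LDy] w by simp
    obtain c where c: "degree c < degree p"
      "\<forall>z. poly ?pC z = 0 \<longrightarrow> of_int D * sigma z w = poly (of_int_poly c) z"
      using Lat_sigma[OF LD D0] by blast
    have cb: "\<forall>z\<in>set zs. cmod (poly (of_int_poly c :: complex poly) z) \<le> of_int D * Kall"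
    proof
      fix z assume "z \<in> set zs"
      then have zR: "z \<in> R" using zs by simp
      then have "poly ?pC z = 0" unfolding R_def by simp
      then have "poly (of_int_poly c) z = of_int D * sigma z w" using c(2) by simp
      then have "cmod (poly (of_int_poly c) z) = of_int D * cmod (sigma z w)"
        using D0 by (simp add: norm_mult)
      also have "\<dots> \<le> of_int D * Kall" using bnd[OF zR, of n] w D0 by (intro mult_left_mono) auto
      finally show "cmod (poly (of_int_poly c :: complex poly) z) \<le> of_int D * Kall" .
    qed
    have "degree (of_int_poly c :: complex poly) < length zs" using c(1) lzs by simp
    then have cK: "\<forall>i. cmod (poly.coeff (of_int_poly c :: complex poly) i) \<le> K" using K cb by blast
    have "\<bar>poly.coeff c i\<bar> \<le> \<lceil>K\<rceil>" for i
    proof -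
      have "real_of_int \<bar>poly.coeff c i\<bar> \<le> K" using cK[rule_format, of i] by simp
      then have "real_of_int \<bar>poly.coeff c i\<bar> \<le> real_of_int \<lceil>K\<rceil>" using le_of_int_ceiling order_trans by blast
      then show ?thesis by linarith
    qed
    then have cS: "c \<in> S" unfolding S_def using c(1) by blast
    have "of_int D * sigma ?b w = poly (of_int_poly c) ?b" using c(2) rootC by blast
    then have "complex_of_real (of_int D * w) = poly (of_int_poly c) ?b" using sigma_real[OF inv(1)] by simp
    then have "of_int D * w = Re (poly (of_int_poly c) ?b)" by (metis Re_complex_of_real)
    then have "w = Re (poly (of_int_poly c) ?b) / of_int D" using D0 by (simp add: field_simps)
    then show "w \<in> (\<lambda>c. Re (poly (of_int_poly c) ?b) / of_int D) ` S" using cS by blast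
  qed
  show ?thesis using finite_subset[OF sub finite_imageI[OF finS]] .
qed

end

theorem theorem3p1:
  fixes p :: "int poly" and \<beta> B :: real and l :: nat
    and xs ys :: "nat \<Rightarrow> real" and F :: "real \<Rightarrow> real"
  assumes "irreducible p" and "lead_coeff p = 1" and "degree p > 1"
    and "\<beta> > 1" and "poly (map_poly real_of_int p) \<beta> = 0"
    and "gen_beta_transf \<beta> B l xs ys F"
    and "\<forall>j\<le>l. xs j \<in> Qfield \<beta>" and "\<forall>j\<in>{1..l}. ys j \<in> Qfield \<beta>"
  shows "((\<forall>z. poly (map_poly complex_of_int p) z = 0 \<and> z \<noteq> complex_of_real \<beta> \<longrightarrow> cmod z < 1) \<longrightarrow>
            (\<forall>x \<in> Qfield \<beta> \<inter> {0..<B}. finite {(F ^^ n) x | n. True} \<and>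
               (\<exists>m k. k > 0 \<and> (F ^^ (m + k)) x = (F ^^ m) x)))
       \<and> ((\<exists>z. poly (map_poly complex_of_int p) z = 0 \<and> z \<noteq> complex_of_real \<beta> \<and> cmod z > 1) \<longrightarrow>
            (\<exists>x \<in> Qfield \<beta> \<inter> {0..<B}. infinite {(F ^^ n) x | n. True}))"
proof -
  interpret bsetup p \<beta> using assms(1,2,3,5) by unfold_locales auto
  show ?thesis
  proof (intro conjI impI)
    assume small: "\<forall>z. poly (map_poly complex_of_int p) z = 0 \<and> z \<noteq> complex_of_real \<beta> \<longrightarrow> cmod z < 1"
    show "\<forall>x \<in> Qfield \<beta> \<inter> {0..<B}. finite {(F ^^ n) x | n. True} \<and>
               (\<exists>m k. k > 0 \<and> (F ^^ (m + k)) x = (F ^^ m) x)"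
    proof
      fix x assume "x \<in> Qfield \<beta> \<inter> {0..<B}"
      then have x: "x \<in> Qfield \<beta>" "0 \<le> x" "x < B" by auto
      have fin: "finite {(F ^^ n) x | n. True}" using part1[OF assms(6) assms(8) small x] .
      have "{(F ^^ n) x | n. True} = range (\<lambda>n. (F ^^ n) x)" by auto
      then have "finite (range (\<lambda>n. (F ^^ n) x))" using fin by simp
      from finite_range_periodic[OF this] have "\<exists>m k. k > 0 \<and> (F ^^ (m + k)) x = (F ^^ m) x" by simp
      then show "finite {(F ^^ n) x | n. True} \<and> (\<exists>m k. k > 0 \<and> (F ^^ (m + k)) x = (F ^^ m) x)"
        using fin by blast
    qed
  next
    assume "\<exists>z. poly (map_poly complex_of_int p) z = 0 \<and> z \<noteq> complex_of_real \<beta> \<and> cmod z > 1"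
    then obtain z where z: "poly (map_poly complex_of_int p) z = 0" "z \<noteq> complex_of_real \<beta>" "cmod z > 1"
      by blast
    show "\<exists>x \<in> Qfield \<beta> \<inter> {0..<B}. infinite {(F ^^ n) x | n. True}"
      by (rule part2[OF assms(6) assms(8) z])
  qed
qed

end
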